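(* Let $q,d\geq 2$ be coprime integers. Suppose that for every $\mathbf{s}\in\mathbb{Z}^5$ the density $\delta(q,d;\mathbf{s})$ exists. Then for every $\theta_w,x\in\mathbb{Z}/d\mathbb{Z}$ and every unit $\theta_u$ of $\mathbb{Z}/d\mathbb{Z}$, $$\delta(q,d;\theta_u,\theta_w,0,0,x)=\frac{1}{d}.$$ In particular, the map $n\mapsto u_q(n)$ is uniformly distributed modulo $d$ (every residue class modulo $d$ is attained by $u_q(n)$ on a set of $n$ of natural density $1/d$).
   Context: For an integer $q\geq 2$ and $n\in\mathbb{N}$: $v_q(0)=0$ and, for $n>0$, $v_q(n)=\max\{k: q^k\mid n\}$; $w_q(n)=\sum_{i=0}^n v_q(i)$; $u_q(n)=\sum_{i=0}^n w_q(i)$. For $\mathbf{s}=(\theta_u,\theta_w,\theta_2,\theta_1,\theta_0)$ with entries in $\mathbb{Z}$ or $\mathbb{Z}/d\mathbb{Z}$, $\gamma(A,q,d;\mathbf{s})$ is the number of $n\in\mathbb{N}$, $n<A$, with $\theta_u u_q(n)+\theta_w w_q(n)+\theta_2\frac{n(n+1)}{2}+\theta_1 n+\theta_0\equiv 0\pmod d$, and $\delta(q,d;\mathbf{s})=\lim_{N\to\infty}\gamma(N,q,d;\mathbf{s})/N$ (when the limit exists). *)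

theory Defs
  imports Complex_Main
begin

definition vq :: "nat \<Rightarrow> nat \<Rightarrow> nat" where
  "vq q n = (if n = 0 then 0 else (GREATEST k. q ^ k dvd n))"

definition wq :: "nat \<Rightarrow> nat \<Rightarrow> nat" where
  "wq q n = (\<Sum>i\<le>n. vq q i)"

definition uq :: "nat \<Rightarrow> nat \<Rightarrow> nat" where
  "uq q n = (\<Sum>i\<le>n. wq q i)"

text \<open>Parameter vector s = (theta_u, theta_w, theta_2, theta_1, theta_0); entries are integers,
  residues mod d are represented by integer representatives.\<close>
type_synonym param = "int \<times> int \<times> int \<times> int \<times> int"

definition gamma_count :: "nat \<Rightarrow> nat \<Rightarrow> nat \<Rightarrow> param \<Rightarrow> nat" where
  "gamma_count A q d s = (case s of (tu, tw, t2, t1, t0) \<Rightarrow>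
     card {n. n < A \<and>
       (tu * int (uq q n) + tw * int (wq q n) + t2 * int (n * (n + 1) div 2)
        + t1 * int n + t0) mod int d = 0})"

definition gamma_ratio :: "nat \<Rightarrow> nat \<Rightarrow> param \<Rightarrow> nat \<Rightarrow> real" where
  "gamma_ratio q d s N = real (gamma_count N q d s) / real N"

end

theory Submission
  imports Defs "HOL-Number_Theory.Number_Theory"
begin

locale qd =
  fixes q d :: nat
  assumes q2: "q \<ge> 2" and d2: "d \<ge> 2" and cop: "coprime q d"
    and conv: "\<forall>s :: param. convergent (gamma_ratio q d s)"
begin

lemma vq_eq:
  assumes "n > 0" "q ^ k dvd n" "\<not> q ^ Suc k dvd n"
  shows "vq q n = k"
proof -
  have "(GREATEST k. q ^ k dvd n) = k"
  proof (rule Greatest_equality)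
    show "q ^ k dvd n" by fact
    fix y assume y: "q ^ y dvd n"
    show "y \<le> k"
    proof (rule ccontr)
      assume "\<not> y \<le> k"
      then have "q ^ Suc k dvd q ^ y" by (intro le_imp_power_dvd) auto
      with y assms(3) show False using dvd_trans by blast
    qed
  qed
  then show ?thesis using assms(1) by (simp add: vq_def)
qed

lemma vq_ex:
  assumes "n > 0"
  shows "\<exists>k. q ^ k dvd n \<and> \<not> q ^ Suc k dvd n"
proof -
  have "\<forall>y. q ^ y dvd n \<longrightarrow> y \<le> n"
  proof (intro allI impI)
    fix y assume "q ^ y dvd n"
    then have "q ^ y \<le> n" using assms by (simp add: dvd_imp_le)
    moreover have "y < 2 ^ y" by (rule less_exp)
    moreover have "(2::nat) ^ y \<le> q ^ y" using q2 by (simp add: power_mono)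
    ultimately show "y \<le> n" by linarith
  qed
  from Nat.ex_has_greatest_nat[of "\<lambda>k. q ^ k dvd n" 0 n, OF _ this]
  obtain x where "q ^ x dvd n" "\<forall>y. q ^ y dvd n \<longrightarrow> y \<le> x" by auto
  then show ?thesis by (intro exI[of _ x]) (metis Suc_n_not_le_n power_Suc)
qed

lemma vq_props:
  assumes "n > 0"
  shows "q ^ vq q n dvd n" "\<not> q ^ Suc (vq q n) dvd n"
  using vq_ex[OF assms] vq_eq[OF assms] by auto

lemma vq_0[simp]: "vq q 0 = 0" by (simp add: vq_def)

lemma vq_not_dvd: assumes "\<not> q dvd n" shows "vq q n = 0"
proof -
  have "n > 0" using assms by (cases n) auto
  then show ?thesis using vq_eq[of n 0] assms by simp
qed

lemma vq_1[simp]: "vq q 1 = 0"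
  using vq_not_dvd[of 1] q2 by simp

lemma vq_pow_mult:
  assumes "m > 0"
  shows "vq q (q ^ L * m) = L + vq q m"
proof (rule vq_eq)
  have qp: "q > 0" using q2 by simp
  show "q ^ L * m > 0" using assms qp by simp
  show "q ^ (L + vq q m) dvd q ^ L * m"
    using vq_props(1)[OF assms] by (simp add: power_add)
  show "\<not> q ^ Suc (L + vq q m) dvd q ^ L * m"
  proof
    assume "q ^ Suc (L + vq q m) dvd q ^ L * m"
    then have "q ^ L * q ^ Suc (vq q m) dvd q ^ L * m" by (simp add: power_add)
    then have "q ^ Suc (vq q m) dvd m" using qp by simp
    then show False using vq_props(2)[OF assms] by simp
  qed
qed

lemma vq_block:
  assumes "0 < i" "i < q ^ L"
  shows "vq q (q ^ L * m + i) = vq q i"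
proof -
  let ?k = "vq q i"
  have d1: "q ^ ?k dvd i" and d2: "\<not> q ^ Suc ?k dvd i" using vq_props[OF assms(1)] by auto
  have "q ^ ?k \<le> i" using d1 assms(1) by (simp add: dvd_imp_le)
  then have "q ^ ?k < q ^ L" using assms(2) by linarith
  then have kL: "?k < L" using q2 by (simp add: power_less_imp_less_exp)
  have a: "q ^ ?k dvd q ^ L * m" by (rule dvd_mult2, rule le_imp_power_dvd) (use kL in auto)
  have b: "q ^ Suc ?k dvd q ^ L * m" by (rule dvd_mult2, rule le_imp_power_dvd) (use kL in auto)
  show ?thesis
  proof (rule vq_eq)
    show "0 < q ^ L * m + i" using assms by simp
    show "q ^ ?k dvd q ^ L * m + i" using a d1 by simp
    show "\<not> q ^ Suc ?k dvd q ^ L * m + i" using b d2 by (simp add: dvd_add_right_iff)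
  qed
qed

lemma wq_0[simp]: "wq q 0 = 0" by (simp add: wq_def)
lemma wq_Suc: "wq q (Suc n) = wq q n + vq q (Suc n)" by (simp add: wq_def)
lemma uq_0[simp]: "uq q 0 = 0" by (simp add: uq_def)
lemma uq_Suc: "uq q (Suc n) = uq q n + wq q (Suc n)" by (simp add: uq_def)

definition up :: "nat \<Rightarrow> nat" where "up n = (\<Sum>i<n. wq q i)"
lemma up_0[simp]: "up 0 = 0" by (simp add: up_def)
lemma up_Suc: "up (Suc n) = up n + wq q n" by (simp add: up_def)
lemma uq_up: "uq q n = up (Suc n)" by (simp add: up_def uq_def lessThan_Suc_atMost)

lemma W1: assumes "r < q ^ L" shows "wq q (q ^ L * m + r) = wq q (q ^ L * m) + wq q r"
  using assms
proof (induction r)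
  case 0 then show ?case by simp
next
  case (Suc r)
  then have "wq q (q ^ L * m + r) = wq q (q ^ L * m) + wq q r" by simp
  moreover have "vq q (q ^ L * m + Suc r) = vq q (Suc r)" using Suc.prems by (intro vq_block) auto
  ultimately show ?case by (simp add: wq_Suc)
qed

lemma W2: "wq q (q ^ L * m) = m * wq q (q ^ L) + wq q m"
proof (induction m)
  case 0 then show ?case by simp
next
  case (Suc m)
  let ?Q = "q ^ L"
  have Qp: "?Q > 0" using q2 by simp
  have e1: "?Q * Suc m = Suc (?Q * m + (?Q - 1))" using Qp by (simp add: algebra_simps)
  have e2: "?Q = Suc (?Q - 1)" using Qp by simp
  have "wq q (?Q * Suc m) = wq q (?Q * m + (?Q - 1)) + vq q (?Q * Suc m)"
    using e1 wq_Suc by (metis mult.commute)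
  also have "wq q (?Q * m + (?Q - 1)) = wq q (?Q * m) + wq q (?Q - 1)"
    using Qp by (intro W1) auto
  also have "vq q (?Q * Suc m) = L + vq q (Suc m)" by (rule vq_pow_mult) simp
  finally have A: "wq q (?Q * Suc m) = wq q (?Q * m) + wq q (?Q - 1) + (L + vq q (Suc m))" .
  have "wq q ?Q = wq q (?Q - 1) + vq q ?Q" using e2 wq_Suc by metis
  moreover have "vq q ?Q = L" by (metis vq_pow_mult[of 1 L] vq_1 mult_1_right add_0_right zero_less_one)
  ultimately have B: "wq q ?Q = wq q (?Q - 1) + L" by simp
  show ?case using A B Suc.IH by (simp add: wq_Suc)
qed

lemma Up1:
  assumes "r \<le> q ^ L"
  shows "up (q ^ L * m + r) = up (q ^ L * m) + r * (m * wq q (q ^ L) + wq q m) + up r"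
  using assms
proof (induction r)
  case 0 then show ?case by simp
next
  case (Suc r)
  then have w: "wq q (q ^ L * m + r) = m * wq q (q ^ L) + wq q m + wq q r" by (subst W1) (auto simp: W2)
  have "up (q ^ L * m + Suc r) = up (q ^ L * m + r) + wq q (q ^ L * m + r)"
    by (simp add: up_Suc)
  also have "up (q ^ L * m + r) = up (q ^ L * m) + r * (m * wq q (q ^ L) + wq q m) + up r"
    using Suc by simp
  finally show ?case unfolding w by (simp add: up_Suc algebra_simps)
qed

lemma Up2:
  "up (q ^ L * m) = q ^ L * wq q (q ^ L) * (\<Sum>i<m. i) + q ^ L * up m + m * up (q ^ L)"
proof (induction m)
  case 0 then show ?case by simp
next
  case (Suc m)
  have "up (q ^ L * Suc m) = up (q ^ L * m + q ^ L)" by (simp add: algebra_simps)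
  also have "\<dots> = up (q ^ L * m) + q ^ L * (m * wq q (q ^ L) + wq q m) + up (q ^ L)"
    by (rule Up1) simp
  finally show ?case using Suc by (simp add: up_Suc algebra_simps)
qed

lemma UQ:
  assumes "r < q ^ L"
  shows "uq q (q ^ L * m + r) = q ^ L * wq q (q ^ L) * (\<Sum>i<m. i) + q ^ L * up m + m * up (q ^ L)
     + (r + 1) * (m * wq q (q ^ L) + wq q m) + uq q r"
proof -
  have "uq q (q ^ L * m + r) = up (q ^ L * m + Suc r)" by (simp add: uq_up)
  also have "\<dots> = up (q ^ L * m) + Suc r * (m * wq q (q ^ L) + wq q m) + up (Suc r)"
    using assms by (intro Up1) simp
  finally show ?thesis by (simp add: Up2 uq_up)
qed

definition f :: "int \<Rightarrow> int \<Rightarrow> int \<Rightarrow> nat \<Rightarrow> int" where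
  "f a b c n = a * int (uq q n) + b * int (wq q n) + c * int n"

lemma block_cong:
  assumes K: "int d dvd int (wq q (q ^ L))" and Q: "int d dvd (int (q ^ L) - 1)" and r: "r < q ^ L"
  shows "\<exists>z. f a b c (q ^ L * m + r) = f a (b + int r * a) (a * int (up (q ^ L)) + c) m + f a b c r + int d * z"
proof -
  obtain k1 where k1: "int (wq q (q ^ L)) = int d * k1" using K by (elim dvdE) blast
  obtain k2 where k2: "int (q ^ L) = 1 + int d * k2" using Q by (elim dvdE) (metis add.commute diff_add_cancel)
  have w: "int (wq q (q ^ L * m + r)) = int (wq q m) + int m * int (wq q (q ^ L)) + int (wq q r)"
    using W1[OF r, of m] W2[of L m] by simp
  have u: "int (uq q (q ^ L * m + r)) = int (q ^ L) * int (wq q (q ^ L)) * int (\<Sum>i<m. i) + int (q ^ L) * int (up m) + int m * int (up (q ^ L))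
     + (int r + 1) * (int m * int (wq q (q ^ L)) + int (wq q m)) + int (uq q r)"
    using UQ[OF r, of m] by (simp add: algebra_simps)
  have um: "int (uq q m) = int (up m) + int (wq q m)" by (simp add: uq_up up_Suc)
  show ?thesis
    apply (rule exI[of _ "a * ((1 + int d * k2) * k1 * int (\<Sum>i<m. i) + k2 * int (up m) + (int r + 1) * int m * k1) + b * int m * k1 + c * k2 * int m"])
    unfolding f_def u w um k1 k2 using k2 by (simp add: algebra_simps)
qed

definition e :: "int \<Rightarrow> complex" where "e x = cis (2 * pi * of_int x / of_nat d)"

lemma e_add: "e (x + y) = e x * e y"
  by (simp add: e_def cis_mult add_divide_distrib distrib_left)

lemma e_dz: "e (int d * z) = 1"
proof -
  have "2 * pi * of_int (int d * z) / of_nat d = 2 * pi * real_of_int z" using d2 by simp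
  then show ?thesis unfolding e_def by simp
qed

lemma e_mod: "e (x mod int d) = e x"
proof -
  have "x = x mod int d + int d * (x div int d)" by simp
  then have "e x = e (x mod int d) * e (int d * (x div int d))" by (metis e_add)
  then show ?thesis by (simp add: e_dz)
qed

lemma e_cong: "x mod int d = y mod int d \<Longrightarrow> e x = e y"
  by (metis e_mod)

lemma norm_e[simp]: "norm (e x) = 1" by (simp add: e_def)

lemma e_0[simp]: "e 0 = 1" by (simp add: e_def)

definition ex :: "int \<Rightarrow> int \<Rightarrow> int \<Rightarrow> nat \<Rightarrow> complex" where
  "ex a b c N = (\<Sum>n<N. e (f a b c n))"

lemma ex_count:
  "ex a b c N = (\<Sum>y\<in>{0..<int d}. e y * of_nat (gamma_count N q d (a, b, 0, c, - y)))"
proof -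
  have "ex a b c N = (\<Sum>n<N. e (f a b c n mod int d))" by (simp add: ex_def e_mod)
  also have "\<dots> = (\<Sum>y\<in>{0..<int d}. \<Sum>n\<in>{n. n \<in> {..<N} \<and> f a b c n mod int d = y}. e (f a b c n mod int d))"
    by (rule sum.group[symmetric]) (use d2 in auto)
  also have "\<dots> = (\<Sum>y\<in>{0..<int d}. e y * of_nat (gamma_count N q d (a, b, 0, c, - y)))"
  proof (rule sum.cong[OF refl])
    fix y assume y: "y \<in> {0..<int d}"
    have "{n. n \<in> {..<N} \<and> f a b c n mod int d = y} = {n. n < N \<and>
       (a * int (uq q n) + b * int (wq q n) + 0 * int (n * (n + 1) div 2) + c * int n + - y) mod int d = 0}"
    proof -
      have "\<And>X. (X + - y) mod int d = 0 \<longleftrightarrow> X mod int d = y"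
      proof -
        fix X :: int
        have "(X + - y) mod int d = 0 \<longleftrightarrow> X mod int d = y mod int d"
          by (simp add: mod_eq_dvd_iff mod_eq_0_iff_dvd)
        also have "y mod int d = y" using y by simp
        finally show "(X + - y) mod int d = 0 \<longleftrightarrow> X mod int d = y" .
      qed
      then show ?thesis by (auto simp: f_def)
    qed
    then have cd: "card {n. n \<in> {..<N} \<and> f a b c n mod int d = y} = gamma_count N q d (a, b, 0, c, - y)"
      by (simp add: gamma_count_def)
    have "(\<Sum>n\<in>{n. n \<in> {..<N} \<and> f a b c n mod int d = y}. e (f a b c n mod int d)) =
          (\<Sum>n\<in>{n. n \<in> {..<N} \<and> f a b c n mod int d = y}. e y)" by (rule sum.cong) auto
    then show "(\<Sum>n\<in>{n. n \<in> {..<N} \<and> f a b c n mod int d = y}. e (f a b c n mod int d)) =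
          e y * of_nat (gamma_count N q d (a, b, 0, c, - y))"
      by (simp add: cd[symmetric] mult.commute)
  qed
  finally show ?thesis .
qed

definition E :: "int \<Rightarrow> int \<Rightarrow> int \<Rightarrow> complex" where
  "E a b c = lim (\<lambda>N. ex a b c N / of_nat N)"

lemma ex_conv: "(\<lambda>N. ex a b c N / of_nat N) \<longlonglongrightarrow> E a b c"
proof -
  have eq: "(\<lambda>N. ex a b c N / of_nat N) = (\<lambda>N. \<Sum>y\<in>{0..<int d}. e y * of_real (gamma_ratio q d (a, b, 0, c, - y) N))"
    by (rule ext) (simp add: ex_count gamma_ratio_def sum_divide_distrib)
  have "\<And>y. convergent (\<lambda>N. gamma_ratio q d (a, b, 0, c, - y) N)" using conv by simp
  then have "\<And>y. (\<lambda>N. gamma_ratio q d (a, b, 0, c, - y) N) \<longlonglongrightarrow> lim (gamma_ratio q d (a, b, 0, c, - y))"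
    by (simp add: convergent_LIMSEQ_iff)
  then have "(\<lambda>N. \<Sum>y\<in>{0..<int d}. e y * of_real (gamma_ratio q d (a, b, 0, c, - y) N)) \<longlonglongrightarrow>
     (\<Sum>y\<in>{0..<int d}. e y * of_real (lim (gamma_ratio q d (a, b, 0, c, - y))))"
    by (intro tendsto_intros)
  then have "convergent (\<lambda>N. ex a b c N / of_nat N)" unfolding eq convergent_def by blast
  then show ?thesis by (simp add: E_def convergent_LIMSEQ_iff)
qed

lemma f_mod:
  assumes "a mod int d = a' mod int d" "b mod int d = b' mod int d" "c mod int d = c' mod int d"
  shows "f a b c n mod int d = f a' b' c' n mod int d"
proof -
  have h1: "int d dvd a - a'" "int d dvd b - b'" "int d dvd c - c'" using assms by (simp_all add: mod_eq_dvd_iff)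
  have "f a b c n - f a' b' c' n = (a - a') * int (uq q n) + (b - b') * int (wq q n) + (c - c') * int n"
    by (simp add: f_def algebra_simps)
  moreover have "int d dvd (a - a') * int (uq q n) + (b - b') * int (wq q n) + (c - c') * int n"
    using h1 by (intro dvd_add dvd_mult2) auto
  ultimately show ?thesis by (simp add: mod_eq_dvd_iff)
qed

lemma E_mod:
  assumes "a mod int d = a' mod int d" "b mod int d = b' mod int d" "c mod int d = c' mod int d"
  shows "E a b c = E a' b' c'"
proof -
  have "ex a b c = ex a' b' c'"
    by (rule ext) (simp add: ex_def e_cong[OF f_mod[OF assms]])
  then show ?thesis by (simp add: E_def)
qed

lemma ex_block:
  assumes K: "int d dvd int (wq q (q ^ L))" and Q: "int d dvd (int (q ^ L) - 1)"
  shows "ex a b c (q ^ L * N) = (\<Sum>r<q ^ L. e (f a b c r) * ex a (b + int r * a) (a * int (up (q ^ L)) + c) N)"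
proof -
  let ?Q = "q ^ L"
  have "ex a b c (?Q * N) = (\<Sum>m<N. \<Sum>n\<in>{m * ?Q..<m * ?Q + ?Q}. e (f a b c n))"
    unfolding ex_def using sum.nat_group[of "\<lambda>n. e (f a b c n)" ?Q N] by (simp add: mult.commute)
  also have "\<dots> = (\<Sum>m<N. \<Sum>r<?Q. e (f a b c (?Q * m + r)))"
  proof (rule sum.cong[OF refl])
    fix m
    have "(\<Sum>n\<in>{0 + m * ?Q..<?Q + m * ?Q}. e (f a b c n)) = (\<Sum>r\<in>{0..<?Q}. e (f a b c (r + m * ?Q)))"
      by (rule sum.shift_bounds_nat_ivl)
    then show "(\<Sum>n\<in>{m * ?Q..<m * ?Q + ?Q}. e (f a b c n)) = (\<Sum>r<?Q. e (f a b c (?Q * m + r)))"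
      by (simp add: atLeast0LessThan add.commute mult.commute)
  qed
  also have "\<dots> = (\<Sum>m<N. \<Sum>r<?Q. e (f a b c r) * e (f a (b + int r * a) (a * int (up ?Q) + c) m))"
  proof (intro sum.cong refl)
    fix m r assume "r \<in> {..<?Q}"
    then obtain z where z: "f a b c (?Q * m + r) = f a (b + int r * a) (a * int (up ?Q) + c) m + f a b c r + int d * z"
      using block_cong[OF K Q] by blast
    show "e (f a b c (?Q * m + r)) = e (f a b c r) * e (f a (b + int r * a) (a * int (up ?Q) + c) m)"
      unfolding z e_add e_dz by simp
  qed
  also have "\<dots> = (\<Sum>r<?Q. e (f a b c r) * ex a (b + int r * a) (a * int (up ?Q) + c) N)"
    by (subst sum.swap) (simp add: ex_def sum_distrib_left)
  finally show ?thesis .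
qed

lemma E_block:
  assumes K: "int d dvd int (wq q (q ^ L))" and Q: "int d dvd (int (q ^ L) - 1)"
  shows "E a b c = (\<Sum>r<q ^ L. e (f a b c r) * E a (b + int r * a) (a * int (up (q ^ L)) + c)) / of_nat (q ^ L)"
proof -
  let ?Q = "q ^ L"
  have Qp: "?Q > 0" using q2 by simp
  have sm: "strict_mono (\<lambda>N. ?Q * N)" using Qp by (simp add: strict_mono_def)
  have l1: "(\<lambda>N. ex a b c (?Q * N) / of_nat (?Q * N)) \<longlonglongrightarrow> E a b c"
    using LIMSEQ_subseq_LIMSEQ[OF ex_conv sm] by (simp add: o_def)
  have eq: "(\<lambda>N. ex a b c (?Q * N) / of_nat (?Q * N)) =
     (\<lambda>N. (\<Sum>r<?Q. e (f a b c r) * (ex a (b + int r * a) (a * int (up ?Q) + c) N / of_nat N)) / of_nat ?Q)"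
  proof (rule ext)
    fix N
    have "ex a b c (?Q * N) / of_nat (?Q * N) = (\<Sum>r<?Q. e (f a b c r) * ex a (b + int r * a) (a * int (up ?Q) + c) N) / (of_nat N * of_nat ?Q)"
      using ex_block[OF K Q, of a b c N] by (simp add: mult.commute)
    also have "\<dots> = (\<Sum>r<?Q. e (f a b c r) * (ex a (b + int r * a) (a * int (up ?Q) + c) N / of_nat N)) / of_nat ?Q"
      by (simp add: sum_divide_distrib[symmetric] divide_divide_eq_left)
    finally show "ex a b c (?Q * N) / of_nat (?Q * N) = (\<Sum>r<?Q. e (f a b c r) * (ex a (b + int r * a) (a * int (up ?Q) + c) N / of_nat N)) / of_nat ?Q" .
  qed
  have l2: "(\<lambda>N. (\<Sum>r<?Q. e (f a b c r) * (ex a (b + int r * a) (a * int (up ?Q) + c) N / of_nat N)) / of_nat ?Q)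
     \<longlonglongrightarrow> (\<Sum>r<?Q. e (f a b c r) * E a (b + int r * a) (a * int (up ?Q) + c)) / of_nat ?Q"
  proof -
    have "\<And>r. (\<lambda>N. e (f a b c r) * (ex a (b + int r * a) (a * int (up ?Q) + c) N / of_nat N))
       \<longlonglongrightarrow> e (f a b c r) * E a (b + int r * a) (a * int (up ?Q) + c)"
      by (intro tendsto_mult_left ex_conv)
    then have "(\<lambda>N. (\<Sum>r<?Q. e (f a b c r) * (ex a (b + int r * a) (a * int (up ?Q) + c) N / of_nat N)))
     \<longlonglongrightarrow> (\<Sum>r<?Q. e (f a b c r) * E a (b + int r * a) (a * int (up ?Q) + c))"
      by (rule tendsto_sum)
    then show ?thesis using Qp by (intro tendsto_divide tendsto_const) auto
  qed
  show ?thesis using LIMSEQ_unique[OF l1 l2[folded eq]] .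
qed

lemma goodL:
  fixes t :: nat
  defines "L \<equiv> totient d * (d * t)"
  shows "int d dvd int (wq q (q ^ L))" "int d dvd (int (q ^ L) - 1)"
proof -
  let ?T = "totient d"
  let ?Q0 = "q ^ ?T"
  have c0: "[?Q0 = 1] (mod d)" using euler_theorem[OF cop] .
  have cj: "[?Q0 ^ j = 1] (mod d)" for j using cong_pow[OF c0, of j] by simp
  have wj: "[wq q (?Q0 ^ j) = j * wq q ?Q0] (mod d)" for j
  proof (induction j)
    case 0
    have "wq q 1 = 0" using wq_Suc[of 0] vq_1 by simp
    then show ?case by simp
  next
    case (Suc j)
    have "wq q (?Q0 ^ Suc j) = ?Q0 ^ j * wq q ?Q0 + wq q (?Q0 ^ j)"
      using W2[of ?T "?Q0 ^ j"] by simp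
    also have "[\<dots> = 1 * wq q ?Q0 + j * wq q ?Q0] (mod d)"
      by (intro cong_add cong_mult cj Suc.IH cong_refl)
    finally show ?case by simp
  qed
  have QL: "q ^ L = ?Q0 ^ (d * t)" unfolding L_def by (simp add: power_mult)
  have "[wq q (q ^ L) = d * t * wq q ?Q0] (mod d)" unfolding QL by (rule wj)
  then have "d dvd wq q (q ^ L)" by (simp add: mult.assoc cong_def mod_eq_0_iff_dvd)
  then show "int d dvd int (wq q (q ^ L))" by simp
  have "[q ^ L = 1] (mod d)" unfolding QL by (rule cj)
  then have "[int (q ^ L) = int 1] (mod int d)" by (simp only: cong_int_iff)
  then show "int d dvd (int (q ^ L) - 1)" by (simp add: cong_iff_dvd_diff)
qed

lemma bigL: "q ^ (totient d * (d * t)) > t"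
proof -
  have "totient d > 0" using d2 by simp
  then have "1 \<le> totient d * d" using d2 by (simp add: Suc_le_eq)
  then have "t \<le> totient d * (d * t)" by (metis mult.assoc mult_le_mono1 mult_1)
  then have "q ^ t \<le> q ^ (totient d * (d * t))" using q2 by (intro power_increasing) auto
  moreover have "(2::nat) ^ t \<le> q ^ t" using q2 by (simp add: power_mono)
  moreover have "t < 2 ^ t" by (rule less_exp)
  ultimately show ?thesis by linarith
qed

lemma e_sum2:
  assumes "norm (e x + e y) \<ge> 2"
  shows "x mod int d = y mod int d"
proof -
  let ?th = "2 * pi * of_int (x - y) / of_nat d"
  have "e x + e y = e y * (e (x - y) + 1)" by (simp add: e_add[symmetric] algebra_simps)
  then have n: "norm (e (x - y) + 1) \<ge> 2" using assms by (simp add: norm_mult)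
  have "e (x - y) + 1 = Complex (cos ?th + 1) (sin ?th)" by (simp add: e_def cis.ctr complex_eq_iff)
  then have "sqrt ((cos ?th + 1)^2 + (sin ?th)^2) \<ge> 2" using n by (simp add: norm_complex_def)
  then have "(cos ?th + 1)^2 + (sin ?th)^2 \<ge> 4" by (metis real_sqrt_four real_sqrt_le_iff)
  then have "cos ?th \<ge> 1" using sin_cos_squared_add[of ?th] by (simp add: power2_eq_square algebra_simps)
  then have "cos ?th = 1" using cos_le_one[of ?th] by linarith
  then obtain n :: int where "?th = n * 2 * pi" by (auto simp: cos_one_2pi_int)
  then have "real_of_int (x - y) * (2 * pi) = real_of_int (n * int d) * (2 * pi)" using d2 by (simp add: field_simps)
  then have "real_of_int (x - y) = real_of_int (n * int d)" using pi_gt_zero by (simp only: mult_right_cancel)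
  then have "x - y = n * int d" by linarith
  then show ?thesis by (simp add: mod_eq_dvd_iff)
qed

lemma f_Suc: "f a b c (Suc n) - f a b c n = a * int (wq q (Suc n)) + b * int (vq q (Suc n)) + c"
  by (simp add: f_def uq_Suc wq_Suc algebra_simps)

lemma not_periodic:
  assumes P: "\<forall>r. f a b c (r + d) mod int d = f a b c r mod int d"
  shows "a mod int d = 0"
proof -
  have Pj: "f a b c (r + j * d) mod int d = f a b c r mod int d" for r j
  proof (induction j)
    case 0 then show ?case by simp
  next
    case (Suc j)
    have "f a b c (r + Suc j * d) = f a b c ((r + j * d) + d)" by (simp add: algebra_simps)
    then show ?case using P Suc.IH by simp
  qed
  define D where "D n = f a b c (n + 2) - 2 * f a b c (n + 1) + f a b c n" for n
  have Dj: "D (n + j * d) mod int d = D n mod int d" for n j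
  proof -
    have h: "int d dvd f a b c (m + j * d) - f a b c m" for m
      using Pj[of m j] by (simp add: mod_eq_dvd_iff)
    have "D (n + j * d) - D n = (f a b c (n + 2 + j * d) - f a b c (n + 2)) - 2 * (f a b c (n + 1 + j * d) - f a b c (n + 1))
       + (f a b c (n + j * d) - f a b c n)" by (simp add: D_def algebra_simps)
    moreover have "int d dvd \<dots>" by (rule dvd_add[OF dvd_diff[OF h dvd_mult[OF h]] h])
    ultimately show ?thesis by (simp add: mod_eq_dvd_iff)
  qed
  have Dform: "D n = a * int (vq q (n + 2)) + b * (int (vq q (n + 2)) - int (vq q (n + 1)))" for n
  proof -
    have "D n = (f a b c (Suc (Suc n)) - f a b c (Suc n)) - (f a b c (Suc n) - f a b c n)"
      by (simp add: D_def)
    also have "\<dots> = a * int (vq q (n + 2)) + b * (int (vq q (n + 2)) - int (vq q (n + 1)))"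
      unfolding f_Suc by (simp add: wq_Suc algebra_simps)
    finally show ?thesis .
  qed
  have cdq: "coprime d q" using cop by (simp add: coprime_commute)
  obtain t0 where t0: "[d * t0 = Suc 0] (mod q)" using cong_solve_coprime_nat[OF cdq] by blast
  define s where "s = d * t0"
  have smod: "s mod q = 1" using t0 q2 by (simp add: s_def cong_def)
  then have sp: "s > 0" by (cases s) auto
  have nqs: "\<not> q dvd s" using smod q2 by (auto simp: dvd_eq_mod_eq_0)
  have vs: "vq q s = 0" by (rule vq_not_dvd[OF nqs])
  have v1: "vq q (q * s) = 1" using vq_pow_mult[OF sp, of 1] vs by simp
  have v2: "vq q (q * q * s) = 2" using vq_pow_mult[OF sp, of 2] vs by (simp add: power2_eq_square)
  have nd: "\<not> q dvd (q * m - 1)" "\<not> q dvd (q * m + 1)" if "m > 0" for m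
  proof -
    have qm: "q * m \<ge> 1" using that q2 by (simp add: Suc_le_eq)
    show "\<not> q dvd (q * m - 1)"
    proof
      assume "q dvd q * m - 1"
      then have "q dvd q * m - (q * m - 1)" using dvd_diff_nat[of q "q * m" "q * m - 1"] by simp
      then have "q dvd 1" using qm by simp
      then show False using q2 by simp
    qed
    show "\<not> q dvd (q * m + 1)"
    proof
      assume "q dvd q * m + 1"
      then have "q dvd 1" using dvd_add_right_iff[of q "q * m" 1] by simp
      then show False using q2 by simp
    qed
  qed
  have sp2: "q * s > 0" using sp q2 by simp
  have vm1: "vq q (q * s - 1) = 0" "vq q (q * s + 1) = 0" using nd[OF sp] vq_not_dvd by auto
  have vm2: "vq q (q * q * s - 1) = 0" "vq q (q * q * s + 1) = 0"
    using nd[OF sp2] vq_not_dvd by (auto simp: mult.assoc)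
  have n1: "q * s \<ge> 2"
  proof -
    have "q * 1 \<le> q * s" using sp by (intro mult_le_mono2) simp
    then show ?thesis using q2 by linarith
  qed
  have step: "q * q * s = q * s + (q * t0 * (q - 1)) * d"
  proof -
    obtain q' where q': "q = Suc q'" using q2 by (cases q) auto
    have "q * q * s = q * s + q * s * (q - 1)" unfolding q' by (simp add: algebra_simps)
    then show ?thesis by (simp add: s_def algebra_simps)
  qed
  let ?j = "q * t0 * (q - 1)"
  have A1: "D (q * s - 2) = a + b"
  proof -
    have "q * s - 2 + 2 = q * s" "q * s - 2 + 1 = q * s - 1" using n1 by auto
    then show ?thesis using Dform[of "q * s - 2"] v1 vm1 by simp
  qed
  have A2: "D (q * s - 2 + ?j * d) = 2 * a + 2 * b"
  proof -
    have "q * s - 2 + ?j * d = q * q * s - 2" using step n1 by simp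
    moreover have "q * q * s - 2 + 2 = q * q * s" "q * q * s - 2 + 1 = q * q * s - 1" using step n1 by auto
    ultimately show ?thesis using Dform[of "q * q * s - 2"] v2 vm2 by (simp add: algebra_simps)
  qed
  have B1: "D (q * s - 1) = - b"
  proof -
    have "q * s - 1 + 2 = q * s + 1" "q * s - 1 + 1 = q * s" using n1 by auto
    then show ?thesis using Dform[of "q * s - 1"] v1 vm1 by simp
  qed
  have B2: "D (q * s - 1 + ?j * d) = - 2 * b"
  proof -
    have "q * s - 1 + ?j * d = q * q * s - 1" using step n1 by simp
    moreover have "q * q * s - 1 + 2 = q * q * s + 1" "q * q * s - 1 + 1 = q * q * s" using step n1 by auto
    ultimately show ?thesis using Dform[of "q * q * s - 1"] v2 vm2 by (simp add: algebra_simps)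
  qed
  have "(2 * a + 2 * b) mod int d = (a + b) mod int d" using Dj[of "q * s - 2" ?j] A1 A2 by simp
  then have "int d dvd (2 * a + 2 * b) - (a + b)" by (simp add: mod_eq_dvd_iff)
  then have X: "int d dvd a + b" by (simp add: algebra_simps)
  have "(- 2 * b) mod int d = (- b) mod int d" using Dj[of "q * s - 1" ?j] B1 B2 by simp
  then have "int d dvd (- 2 * b) - (- b)" by (simp add: mod_eq_dvd_iff)
  then have Y: "int d dvd b" by (simp add: algebra_simps)
  have "int d dvd (a + b) - b" using X Y by (rule dvd_diff)
  then show ?thesis by simp
qed

lemma E_zero:
  assumes a: "a mod int d \<noteq> 0"
  shows "E a b c = 0"
proof -
  define S where "S = {1..<int d} \<times> {0..<int d} \<times> {0..<int d}"
  define F where "F = (\<lambda>(x, y, z). norm (E x y z))"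
  define M where "M = Max (F ` S)"
  have fin: "finite (F ` S)" by (simp add: S_def)
  have ne: "F ` S \<noteq> {}" using d2 by (auto simp: S_def)
  have bound: "norm (E x y z) \<le> M" if "x mod int d \<noteq> 0" for x y z
  proof -
    have "E x y z = E (x mod int d) (y mod int d) (z mod int d)" by (rule E_mod) simp_all
    moreover have "(x mod int d, y mod int d, z mod int d) \<in> S"
    proof -
      have "x mod int d \<ge> 0" using d2 by simp
      then have "x mod int d \<ge> 1" using that by linarith
      then show ?thesis using d2 by (auto simp: S_def)
    qed
    ultimately have "norm (E x y z) \<in> F ` S" by (force simp: F_def)
    then show ?thesis unfolding M_def using fin by simp
  qed
  obtain a0 b0 c0 where abc: "(a0, b0, c0) \<in> S" and Mdef: "M = norm (E a0 b0 c0)"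
    using Max_in[OF fin ne] unfolding M_def F_def by auto
  have a0: "a0 mod int d \<noteq> 0" "a0 mod int d = a0" using abc by (auto simp: S_def)
  have M0: "M \<ge> 0" using Mdef by simp
  have "M = 0"
  proof (rule ccontr)
    assume "M \<noteq> 0"
    then have Mp: "M > 0" using M0 by simp
    have per: "\<forall>r. f a0 b0 c0 (r + d) mod int d = f a0 b0 c0 r mod int d"
    proof
      fix r
      define L where "L = totient d * (d * (r + d + 1))"
      define Q where "Q = q ^ L"
      have QL: "Q > r + d + 1" unfolding Q_def L_def by (rule bigL)
      have K: "int d dvd int (wq q (q ^ L))" and Qc: "int d dvd (int (q ^ L) - 1)"
        unfolding L_def by (rule goodL)+
      define U where "U = a0 * int (up Q) + c0"
      define z where "z r' = e (f a0 b0 c0 r') * E a0 (b0 + int r' * a0) U" for r'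
      have Eb: "E a0 b0 c0 = (\<Sum>r'<Q. z r') / of_nat Q"
        using E_block[OF K Qc, of a0 b0 c0] by (simp add: z_def U_def Q_def)
      have Qp: "Q > 0" using QL by simp
      have nz: "norm (z r') \<le> M" for r'
        using bound[OF a0(1)] by (simp add: z_def norm_mult)
      have "norm (\<Sum>r'<Q. z r') = of_nat Q * M"
        using Eb Mdef Qp by (simp add: norm_divide)
      define A where "A = {..<Q} - {r} - {r + d}"
      have r1: "r \<in> {..<Q}" and r2: "r + d \<in> {..<Q} - {r}" using QL d2 by auto
      have split: "(\<Sum>r'<Q. z r') = z r + z (r + d) + (\<Sum>r'\<in>A. z r')"
        unfolding A_def using sum.remove[OF _ r1, of z] sum.remove[OF _ r2, of z] by simp
      have cA: "card A = Q - 2" unfolding A_def using r1 r2 by (simp add: card_Diff_singleton)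
      have "norm (\<Sum>r'\<in>A. z r') \<le> (\<Sum>r'\<in>A. norm (z r'))" by (rule norm_sum)
      also have "\<dots> \<le> (\<Sum>r'\<in>A. M)" by (rule sum_mono) (rule nz)
      also have "\<dots> = real (Q - 2) * M" using cA by simp
      finally have nA: "norm (\<Sum>r'\<in>A. z r') \<le> real (Q - 2) * M" .
      have "of_nat Q * M = norm (z r + z (r + d) + (\<Sum>r'\<in>A. z r'))"
        using \<open>norm (\<Sum>r'<Q. z r') = of_nat Q * M\<close> split by simp
      also have "\<dots> \<le> norm (z r + z (r + d)) + norm (\<Sum>r'\<in>A. z r')" by (rule norm_triangle_ineq)
      finally have "of_nat Q * M \<le> norm (z r + z (r + d)) + norm (\<Sum>r'\<in>A. z r')" .
      then have "of_nat Q * M \<le> norm (z r + z (r + d)) + real (Q - 2) * M" using nA by linarith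
      moreover have "real (Q - 2) = real Q - 2" using QL d2 by (simp add: of_nat_diff)
      ultimately have h2: "2 * M \<le> norm (z r + z (r + d))" by (simp add: algebra_simps)
      have Eeq: "E a0 (b0 + int (r + d) * a0) U = E a0 (b0 + int r * a0) U"
      proof (rule E_mod)
        have "b0 + int (r + d) * a0 = (b0 + int r * a0) + int d * a0" by (simp add: algebra_simps)
        then show "(b0 + int (r + d) * a0) mod int d = (b0 + int r * a0) mod int d" by (metis mod_mult_self2)
      qed simp_all
      have "z r + z (r + d) = (e (f a0 b0 c0 r) + e (f a0 b0 c0 (r + d))) * E a0 (b0 + int r * a0) U"
        unfolding z_def Eeq by (simp add: algebra_simps)
      then have "norm (z r + z (r + d)) \<le> norm (e (f a0 b0 c0 r) + e (f a0 b0 c0 (r + d))) * M"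
        using bound[OF a0(1), of "b0 + int r * a0" U] by (simp add: norm_mult mult_left_mono)
      with h2 have "2 * M \<le> norm (e (f a0 b0 c0 r) + e (f a0 b0 c0 (r + d))) * M" by linarith
      then have "2 \<le> norm (e (f a0 b0 c0 r) + e (f a0 b0 c0 (r + d)))"
        using mult_le_cancel_right_pos[OF Mp] by blast
      then have "f a0 b0 c0 r mod int d = f a0 b0 c0 (r + d) mod int d" by (rule e_sum2)
      then show "f a0 b0 c0 (r + d) mod int d = f a0 b0 c0 r mod int d" by simp
    qed
    have "a0 mod int d = 0" by (rule not_periodic[OF per])
    then show False using a0 by simp
  qed
  then show ?thesis using bound[OF a] by simp
qed

lemma E000: "E 0 0 0 = 1"
proof -
  have ex0: "ex 0 0 0 N = of_nat N" for N by (simp add: ex_def f_def)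
  have "eventually (\<lambda>N. 1 = ex 0 0 0 N / of_nat N) sequentially"
    using eventually_ge_at_top[of 1] by eventually_elim (simp add: ex0)
  then have "(\<lambda>N. ex 0 0 0 N / of_nat N) \<longlonglongrightarrow> 1"
    by (rule Lim_transform_eventually[OF tendsto_const])
  then show ?thesis using ex_conv LIMSEQ_unique by blast
qed

lemma e_pow: "e (int k * y) = e y ^ k"
proof (induction k)
  case 0 then show ?case by simp
next
  case (Suc k)
  have "e (int (Suc k) * y) = e (int k * y + y)" by (simp add: algebra_simps)
  then show ?case using Suc by (simp add: e_add)
qed

lemma orth: "(\<Sum>k<d. e (int k * y)) = (if y mod int d = 0 then of_nat d else 0)"
proof (cases "y mod int d = 0")
  case True
  then have "e y = 1" using e_cong[of y 0] by simp
  then show ?thesis using True by (simp add: e_pow)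
next
  case False
  have ne: "e y \<noteq> 1"
  proof
    assume "e y = 1"
    then have "norm (e y + e 0) \<ge> 2" by simp
    then have "y mod int d = 0 mod int d" by (rule e_sum2)
    then show False using False by simp
  qed
  have "e y ^ d = 1" using e_pow[of d y] e_dz[of y] by simp
  then show ?thesis using False ne by (simp add: e_pow sum_gp_strict)
qed

lemma part1:
  assumes cp: "coprime tu (int d)"
  shows "gamma_ratio q d (tu, tw, 0, 0, x) \<longlonglongrightarrow> 1 / real d"
proof -
  define F where "F n = tu * int (uq q n) + tw * int (wq q n)" for n
  have dpos: "(of_nat d :: complex) \<noteq> 0" using d2 by simp
  have cnt: "of_nat (gamma_count N q d (tu, tw, 0, 0, x)) =
     (\<Sum>k<d. e (int k * x) * ex (int k * tu) (int k * tw) 0 N) / (of_nat d :: complex)" for N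
  proof -
    have "gamma_count N q d (tu, tw, 0, 0, x) = card {n \<in> {..<N}. (F n + x) mod int d = 0}"
      by (simp add: gamma_count_def F_def)
    then have "(of_nat (gamma_count N q d (tu, tw, 0, 0, x)) :: complex) =
      (\<Sum>n<N. if (F n + x) mod int d = 0 then 1 else 0)"
      by (simp add: sum.inter_filter[symmetric])
    also have "\<dots> = (\<Sum>n<N. (\<Sum>k<d. e (int k * (F n + x))) / of_nat d)"
      by (rule sum.cong[OF refl]) (use d2 in \<open>simp add: orth\<close>)
    also have "\<dots> = (\<Sum>n<N. \<Sum>k<d. e (int k * x) * e (f (int k * tu) (int k * tw) 0 n)) / of_nat d"
    proof -
      have "e (int k * (F n + x)) = e (int k * x) * e (f (int k * tu) (int k * tw) 0 n)" for k n
      proof -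
        have "int k * (F n + x) = int k * x + f (int k * tu) (int k * tw) 0 n"
          by (simp add: F_def f_def algebra_simps)
        then show ?thesis by (simp add: e_add)
      qed
      then show ?thesis by (simp add: sum_divide_distrib)
    qed
    also have "\<dots> = (\<Sum>k<d. e (int k * x) * ex (int k * tu) (int k * tw) 0 N) / of_nat d"
      by (subst sum.swap) (simp add: ex_def sum_distrib_left)
    finally show ?thesis .
  qed
  have eq: "(\<lambda>N. of_real (gamma_ratio q d (tu, tw, 0, 0, x) N) :: complex) =
    (\<lambda>N. (\<Sum>k<d. e (int k * x) * (ex (int k * tu) (int k * tw) 0 N / of_nat N)) / of_nat d)"
  proof (rule ext)
    fix N
    have "(of_real (gamma_ratio q d (tu, tw, 0, 0, x) N) :: complex) = of_nat (gamma_count N q d (tu, tw, 0, 0, x)) / of_nat N"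
      by (simp add: gamma_ratio_def)
    also have "\<dots> = (\<Sum>k<d. e (int k * x) * (ex (int k * tu) (int k * tw) 0 N / of_nat N)) / of_nat d"
      unfolding cnt by (simp add: sum_divide_distrib[symmetric] divide_divide_eq_left mult.commute)
    finally show "(of_real (gamma_ratio q d (tu, tw, 0, 0, x) N) :: complex) = (\<Sum>k<d. e (int k * x) * (ex (int k * tu) (int k * tw) 0 N / of_nat N)) / of_nat d" .
  qed
  have lim: "(\<lambda>N. (\<Sum>k<d. e (int k * x) * (ex (int k * tu) (int k * tw) 0 N / of_nat N)) / of_nat d)
     \<longlonglongrightarrow> (\<Sum>k<d. e (int k * x) * E (int k * tu) (int k * tw) 0) / of_nat d"
  proof -
    have "\<And>k. (\<lambda>N. e (int k * x) * (ex (int k * tu) (int k * tw) 0 N / of_nat N)) \<longlonglongrightarrow> e (int k * x) * E (int k * tu) (int k * tw) 0"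
      by (intro tendsto_mult_left ex_conv)
    then have "(\<lambda>N. \<Sum>k<d. e (int k * x) * (ex (int k * tu) (int k * tw) 0 N / of_nat N)) \<longlonglongrightarrow> (\<Sum>k<d. e (int k * x) * E (int k * tu) (int k * tw) 0)"
      by (rule tendsto_sum)
    then show ?thesis using dpos by (intro tendsto_divide tendsto_const) auto
  qed
  have S1: "(\<Sum>k<d. e (int k * x) * E (int k * tu) (int k * tw) 0) = 1"
  proof -
    have z: "e (int k * x) * E (int k * tu) (int k * tw) 0 = 0" if "k \<in> {..<d} - {0}" for k
    proof -
      have k: "0 < k" "k < d" using that by auto
      have "(int k * tu) mod int d \<noteq> 0"
      proof
        assume "(int k * tu) mod int d = 0"
        then have "int d dvd int k * tu" by (simp add: mod_eq_0_iff_dvd)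
        moreover have "coprime (int d) tu" using cp by (simp add: coprime_commute)
        ultimately have "int d dvd int k" using coprime_dvd_mult_left_iff by blast
        then have "d dvd k" by simp
        then show False using k by (auto dest: dvd_imp_le)
      qed
      then show ?thesis by (simp add: E_zero)
    qed
    have "(\<Sum>k<d. e (int k * x) * E (int k * tu) (int k * tw) 0) =
       e (int 0 * x) * E (int 0 * tu) (int 0 * tw) 0 + (\<Sum>k\<in>{..<d} - {0}. e (int k * x) * E (int k * tu) (int k * tw) 0)"
      by (rule sum.remove) (use d2 in auto)
    also have "(\<Sum>k\<in>{..<d} - {0}. e (int k * x) * E (int k * tu) (int k * tw) 0) = 0"
      using z by (intro sum.neutral) blast
    finally show ?thesis by (simp add: E000)
  qed
  have "(\<lambda>N. of_real (gamma_ratio q d (tu, tw, 0, 0, x) N) :: complex) \<longlonglongrightarrow> of_real (1 / real d)"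
    using lim unfolding eq S1 by simp
  then show ?thesis by (simp only: tendsto_of_real_iff)
qed

lemma part2:
  "(\<lambda>N. real (card {n. n < N \<and> int (uq q n) mod int d = r mod int d}) / real N) \<longlonglongrightarrow> 1 / real d"
proof -
  have "{n. n < N \<and> int (uq q n) mod int d = r mod int d} =
    {n. n < N \<and> (1 * int (uq q n) + 0 * int (wq q n) + 0 * int (n * (n + 1) div 2) + 0 * int n + - r) mod int d = 0}" for N
    by (auto simp: mod_eq_dvd_iff mod_eq_0_iff_dvd)
  then have "(\<lambda>N. real (card {n. n < N \<and> int (uq q n) mod int d = r mod int d}) / real N) = gamma_ratio q d (1, 0, 0, 0, - r)"
    by (intro ext) (simp only: gamma_ratio_def gamma_count_def prod.case)
  then show ?thesis using part1[of 1 0 "- r"] by simp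
qed

end
theorem theorem4p4:
  fixes q d :: nat
  assumes "q \<ge> 2" and "d \<ge> 2" and "coprime q d"
    and "\<forall>s :: param. convergent (gamma_ratio q d s)"
  shows "(\<forall>tu tw x :: int. coprime tu (int d) \<longrightarrow>
            gamma_ratio q d (tu, tw, 0, 0, x) \<longlonglongrightarrow> 1 / real d)
       \<and> (\<forall>r :: int. (\<lambda>N. real (card {n. n < N \<and> int (uq q n) mod int d = r mod int d}) / real N)
            \<longlonglongrightarrow> 1 / real d)"
proof -
  interpret qd q d using assms by unfold_locales auto
  show ?thesis using part1 part2 by blast
qed

end
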